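(* Suppose there exist an $(N_1,N_2,N_3)$-achievable $(n_1,n_2,n_3,k_1,k_2,T)_{\mathbb{F}}$ streaming code and an $(N_1,N_2,N_3)$-achievable $(n_1',n_2',n_3',k_1',k_2',T)_{\mathbb{F}}$ streaming code. Then for all nonnegative integers $A,B$ there exists an $(N_1,N_2,N_3)$-achievable $(An_1+Bn_1',\,An_2+Bn_2',\,An_3+Bn_3',\,Ak_1+Bk_1',\,Ak_2+Bk_2',\,T)_{\mathbb{F}}$ streaming code.
   Context: Network: two sources, one relay, one destination; no direct source–destination link. Source $i\in\{1,2\}$ has messages $s_{t,i}\in\mathbb{F}^{k_i}$, $t\ge0$, over a finite field $\mathbb{F}$. A time-invariant $(n_1,n_2,n_3,k_1,k_2,T)_{\mathbb{F}}$ streaming code (unbounded memory): source $i$ sends at time $t$ a packet $x^{(1)}_{t,i}\in\mathbb{F}^{n_i}$, a fixed function of $s_{0,i},\dots,s_{t,i}$; a relay function $g$, the same at every time $t$, takes the packets received from both sources at times $t-T,\dots,t$ together with the relay's previously produced estimates of past source messages, and outputs a packet $x^{(2)}_t\in\mathbb{F}^{n_3}$ and estimates of $s_{t-T,1},s_{t-T,2}$; the destination outputs at time $t+T$ estimates $\hat s_{t,i}$ from its received packets up to time $t+T$. Each link is a packet erasure channel (received packet is the sent one or the erasure symbol $*$). An $N$-erasure sequence has exactly $N$ erased times; link source $i\to$relay suffers an arbitrary $N_i$-erasure sequence, relay$\to$destination an arbitrary $N_3$-erasure sequence. The code is $(N_1,N_2,N_3)$-achievable if $\hat s_{t,i}=s_{t,i}$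 always. *)

theory Defs
  imports Main
begin

text \<open>Vectors over the field are lists; a received packet is None (erasure) or Some packet.\<close>

type_synonym 'f encoder = "'f list list \<Rightarrow> 'f list"
  \<comment> \<open>maps the message history s_0,...,s_t of a source to the packet sent at time t\<close>

type_synonym 'f relayfun =
  "'f list option list \<Rightarrow> 'f list option list \<Rightarrow> ('f list \<times> 'f list) list
     \<Rightarrow> 'f list \<times> 'f list \<times> 'f list"
  \<comment> \<open>(received window from source 1 at times t-T..t, same for source 2,
       previously produced estimates of (s_{tau,1}, s_{tau,2}) for tau = 0..t-T-1)
       \<mapsto> (relay packet, estimate of s_{t-T,1}, estimate of s_{t-T,2})\<close>

type_synonym 'f decoder = "'f list option list \<Rightarrow> 'f list \<times> 'f list"
  \<comment> \<open>received relay packets at times 0..t+T \<mapsto> estimates of (s_{t,1}, s_{t,2})\<close>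

type_synonym 'f scode = "'f encoder \<times> 'f encoder \<times> 'f relayfun \<times> 'f decoder"

definition erasure_seq :: "nat \<Rightarrow> (nat \<Rightarrow> bool) \<Rightarrow> bool" where
  "erasure_seq N e \<longleftrightarrow> finite {t. e t} \<and> card {t. e t} = N"

definition channel :: "(nat \<Rightarrow> bool) \<Rightarrow> (nat \<Rightarrow> 'a) \<Rightarrow> nat \<Rightarrow> 'a option" where
  "channel e x t = (if e t then None else Some (x t))"

text \<open>Received packets at times max(0,t-T),...,t.\<close>
definition window :: "nat \<Rightarrow> (nat \<Rightarrow> 'a option) \<Rightarrow> nat \<Rightarrow> 'a option list" where
  "window T y t = map y [t - T..<Suc t]"

text \<open>Relay outputs at times 0,...,t-1; at time t the relay is given the estimates it produced
  at times T,...,t-1 (i.e. of the messages at times 0,...,t-1-T).\<close>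
primrec relay_hist ::
  "nat \<Rightarrow> 'f relayfun \<Rightarrow> (nat \<Rightarrow> 'f list option list) \<Rightarrow> (nat \<Rightarrow> 'f list option list)
     \<Rightarrow> nat \<Rightarrow> ('f list \<times> 'f list \<times> 'f list) list" where
  "relay_hist T g w1 w2 0 = []"
| "relay_hist T g w1 w2 (Suc t) =
     relay_hist T g w1 w2 t @ [g (w1 t) (w2 t) (map snd (drop T (relay_hist T g w1 w2 t)))]"

definition src_packet :: "'f encoder \<Rightarrow> (nat \<Rightarrow> 'f list) \<Rightarrow> nat \<Rightarrow> 'f list" where
  "src_packet f s t = f (map s [0..<Suc t])"

definition relay_packet ::
  "nat \<Rightarrow> 'f scode \<Rightarrow> (nat \<Rightarrow> 'f list) \<Rightarrow> (nat \<Rightarrow> 'f list) \<Rightarrow> (nat \<Rightarrow> bool) \<Rightarrow> (nat \<Rightarrow> bool)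
     \<Rightarrow> nat \<Rightarrow> 'f list" where
  "relay_packet T C s1 s2 e1 e2 t =
     (case C of (f1, f2, g, d) \<Rightarrow>
        fst (relay_hist T g (window T (channel e1 (src_packet f1 s1)))
                            (window T (channel e2 (src_packet f2 s2))) (Suc t) ! t))"

definition dest_estimate ::
  "nat \<Rightarrow> 'f scode \<Rightarrow> (nat \<Rightarrow> 'f list) \<Rightarrow> (nat \<Rightarrow> 'f list) \<Rightarrow> (nat \<Rightarrow> bool) \<Rightarrow> (nat \<Rightarrow> bool)
     \<Rightarrow> (nat \<Rightarrow> bool) \<Rightarrow> nat \<Rightarrow> 'f list \<times> 'f list" where
  "dest_estimate T C s1 s2 e1 e2 e3 t =
     (case C of (f1, f2, g, d) \<Rightarrow>
        d (map (channel e3 (relay_packet T C s1 s2 e1 e2)) [0..<Suc (t + T)]))"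

definition rx_ok :: "nat \<Rightarrow> 'f list option \<Rightarrow> bool" where
  "rx_ok n y \<longleftrightarrow> (\<forall>x. y = Some x \<longrightarrow> length x = n)"

definition streaming_code ::
  "nat \<Rightarrow> nat \<Rightarrow> nat \<Rightarrow> nat \<Rightarrow> nat \<Rightarrow> nat \<Rightarrow> 'f scode \<Rightarrow> bool" where
  "streaming_code n1 n2 n3 k1 k2 T C \<longleftrightarrow>
     (case C of (f1, f2, g, d) \<Rightarrow>
        (\<forall>ss. (\<forall>s\<in>set ss. length s = k1) \<longrightarrow> length (f1 ss) = n1) \<and>
        (\<forall>ss. (\<forall>s\<in>set ss. length s = k2) \<longrightarrow> length (f2 ss) = n2) \<and>
        (\<forall>w1 w2 es. (\<forall>y\<in>set w1. rx_ok n1 y) \<and> (\<forall>y\<in>set w2. rx_ok n2 y) \<and>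
              (\<forall>(a, b)\<in>set es. length a = k1 \<and> length b = k2) \<longrightarrow>
           (case g w1 w2 es of (x, a, b) \<Rightarrow> length x = n3 \<and> length a = k1 \<and> length b = k2)) \<and>
        (\<forall>z. (\<forall>y\<in>set z. rx_ok n3 y) \<longrightarrow>
           (case d z of (a, b) \<Rightarrow> length a = k1 \<and> length b = k2)))"

definition achievable :: "nat \<Rightarrow> nat \<Rightarrow> nat \<Rightarrow> nat \<Rightarrow> nat \<Rightarrow> nat \<Rightarrow> 'f scode \<Rightarrow> bool" where
  "achievable N1 N2 N3 k1 k2 T C \<longleftrightarrow>
     (\<forall>s1 s2 e1 e2 e3.
        (\<forall>t. length (s1 t) = k1) \<longrightarrow> (\<forall>t. length (s2 t) = k2) \<longrightarrow>
        erasure_seq N1 e1 \<longrightarrow> erasure_seq N2 e2 \<longrightarrow> erasure_seq N3 e3 \<longrightarrow>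
        (\<forall>t. dest_estimate T C s1 s2 e1 e2 e3 t = (s1 t, s2 t)))"

end

theory Submission imports Defs begin

definition comb3 :: "'f list \<times> 'f list \<times> 'f list \<Rightarrow> 'f list \<times> 'f list \<times> 'f list \<Rightarrow> 'f list \<times> 'f list \<times> 'f list" where
  "comb3 p q = (case p of (x,a,b) \<Rightarrow> case q of (x',a',b') \<Rightarrow> (x@x', a@a', b@b'))"

definition comb_g :: "nat \<Rightarrow> nat \<Rightarrow> nat \<Rightarrow> nat \<Rightarrow> 'f relayfun \<Rightarrow> 'f relayfun \<Rightarrow> 'f relayfun" where
  "comb_g n1 n2 k1 k2 g g' w1 w2 es = comb3
     (g (map (map_option (take n1)) w1) (map (map_option (take n2)) w2) (map (\<lambda>(a,b). (take k1 a, take k2 b)) es))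
     (g' (map (map_option (drop n1)) w1) (map (map_option (drop n2)) w2) (map (\<lambda>(a,b). (drop k1 a, drop k2 b)) es))"

lemma hist_len: "length (relay_hist T g w1 w2 t) = t"
  by (induction t) auto

lemma hist_comb:
  assumes "\<And>t. \<forall>(x,a,b)\<in>set (relay_hist T g (\<lambda>t. map (map_option (take n1)) (w1 t)) (\<lambda>t. map (map_option (take n2)) (w2 t)) t).
              length a = k1 \<and> length b = k2"
  shows "relay_hist T (comb_g n1 n2 k1 k2 g g') w1 w2 t =
     map (case_prod comb3) (zip (relay_hist T g (\<lambda>t. map (map_option (take n1)) (w1 t)) (\<lambda>t. map (map_option (take n2)) (w2 t)) t)
                                (relay_hist T g' (\<lambda>t. map (map_option (drop n1)) (w1 t)) (\<lambda>t. map (map_option (drop n2)) (w2 t)) t))"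
proof (induction t)
  case 0
  then show ?case by simp
next
  case (Suc t)
  let ?H = "relay_hist T g (\<lambda>t. map (map_option (take n1)) (w1 t)) (\<lambda>t. map (map_option (take n2)) (w2 t)) t"
  let ?H' = "relay_hist T g' (\<lambda>t. map (map_option (drop n1)) (w1 t)) (\<lambda>t. map (map_option (drop n2)) (w2 t)) t"
  have L: "\<And>i. i < t \<Longrightarrow> length (fst (snd (?H ! i))) = k1 \<and> length (snd (snd (?H ! i))) = k2"
  proof -
    fix i assume "i < t"
    then have "?H ! i \<in> set ?H" by (simp add: hist_len)
    then show "length (fst (snd (?H ! i))) = k1 \<and> length (snd (snd (?H ! i))) = k2"
      using assms[of t] by (auto simp: split_beta)
  qed
  have e1: "map (\<lambda>(a,b). (take k1 a, take k2 b)) (map snd (drop T (map (case_prod comb3) (zip ?H ?H')))) = map snd (drop T ?H)"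
    apply (rule nth_equalityI)
     apply (simp add: hist_len)
    subgoal for i using L[of "T+i"] by (auto simp: hist_len comb3_def split: prod.splits)
    done
  have e2: "map (\<lambda>(a,b). (drop k1 a, drop k2 b)) (map snd (drop T (map (case_prod comb3) (zip ?H ?H')))) = map snd (drop T ?H')"
    apply (rule nth_equalityI)
     apply (simp add: hist_len)
    subgoal for i using L[of "T+i"] by (auto simp: hist_len comb3_def split: prod.splits)
    done
  show ?case using Suc e1 e2 by (simp add: comb_g_def hist_len)
qed

definition comb_code :: "nat \<Rightarrow> nat \<Rightarrow> nat \<Rightarrow> nat \<Rightarrow> nat \<Rightarrow> 'f scode \<Rightarrow> 'f scode \<Rightarrow> 'f scode" where
  "comb_code n1 n2 n3 k1 k2 C C' = (case C of (f1,f2,g,d) \<Rightarrow> case C' of (f1',f2',g',d') \<Rightarrow>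
     (\<lambda>ss. f1 (map (take k1) ss) @ f1' (map (drop k1) ss),
      \<lambda>ss. f2 (map (take k2) ss) @ f2' (map (drop k2) ss),
      comb_g n1 n2 k1 k2 g g',
      \<lambda>z. (case d (map (map_option (take n3)) z) of (a,b) \<Rightarrow>
             case d' (map (map_option (drop n3)) z) of (a',b') \<Rightarrow> (a@a', b@b'))))"

lemma hist_wf:
  assumes g: "\<forall>w1 w2 es. (\<forall>y\<in>set w1. rx_ok n1 y) \<and> (\<forall>y\<in>set w2. rx_ok n2 y) \<and>
              (\<forall>(a, b)\<in>set es. length a = k1 \<and> length b = k2) \<longrightarrow>
           (case g w1 w2 es of (x, a, b) \<Rightarrow> length x = n3 \<and> length a = k1 \<and> length b = k2)"
    and w1: "\<And>t. \<forall>y\<in>set (w1 t). rx_ok n1 y" and w2: "\<And>t. \<forall>y\<in>set (w2 t). rx_ok n2 y"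
  shows "\<forall>(x,a,b)\<in>set (relay_hist T g w1 w2 t). length x = n3 \<and> length a = k1 \<and> length b = k2"
proof (induction t)
  case 0
  then show ?case by simp
next
  case (Suc t)
  let ?es = "map snd (drop T (relay_hist T g w1 w2 t))"
  have es: "\<forall>(a, b)\<in>set ?es. length a = k1 \<and> length b = k2"
    using Suc by (auto dest!: in_set_dropD)
  have "case g (w1 t) (w2 t) ?es of (x, a, b) \<Rightarrow> length x = n3 \<and> length a = k1 \<and> length b = k2"
    apply (rule g[rule_format])
    using w1 w2 es by blast
  then show ?case using Suc by auto
qed

lemma rx_take: "rx_ok (n+n') y \<Longrightarrow> rx_ok n (map_option (take n) y)"
  by (auto simp: rx_ok_def)
lemma rx_drop: "rx_ok (n+n') y \<Longrightarrow> rx_ok n' (map_option (drop n) y)"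
  by (auto simp: rx_ok_def)

lemma comb_sc:
  assumes "streaming_code n1 n2 n3 k1 k2 T C" "streaming_code n1' n2' n3' k1' k2' T C'"
  shows "streaming_code (n1+n1') (n2+n2') (n3+n3') (k1+k1') (k2+k2') T (comb_code n1 n2 n3 k1 k2 C C')"
proof -
  obtain f1 f2 g d where C: "C = (f1,f2,g,d)" by (cases C) auto
  obtain f1' f2' g' d' where C': "C' = (f1',f2',g',d')" by (cases C') auto
  have a1: "\<forall>ss. (\<forall>s\<in>set ss. length s = k1) \<longrightarrow> length (f1 ss) = n1"
   and a2: "\<forall>ss. (\<forall>s\<in>set ss. length s = k2) \<longrightarrow> length (f2 ss) = n2"
   and a3: "\<forall>w1 w2 es. (\<forall>y\<in>set w1. rx_ok n1 y) \<and> (\<forall>y\<in>set w2. rx_ok n2 y) \<and>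
              (\<forall>(a, b)\<in>set es. length a = k1 \<and> length b = k2) \<longrightarrow>
           (case g w1 w2 es of (x, a, b) \<Rightarrow> length x = n3 \<and> length a = k1 \<and> length b = k2)"
   and a4: "\<forall>z. (\<forall>y\<in>set z. rx_ok n3 y) \<longrightarrow>
           (case d z of (a, b) \<Rightarrow> length a = k1 \<and> length b = k2)"
    using assms(1) unfolding C streaming_code_def by simp_all
  have b1: "\<forall>ss. (\<forall>s\<in>set ss. length s = k1') \<longrightarrow> length (f1' ss) = n1'"
   and b2: "\<forall>ss. (\<forall>s\<in>set ss. length s = k2') \<longrightarrow> length (f2' ss) = n2'"
   and b3: "\<forall>w1 w2 es. (\<forall>y\<in>set w1. rx_ok n1' y) \<and> (\<forall>y\<in>set w2. rx_ok n2' y) \<and>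
              (\<forall>(a, b)\<in>set es. length a = k1' \<and> length b = k2') \<longrightarrow>
           (case g' w1 w2 es of (x, a, b) \<Rightarrow> length x = n3' \<and> length a = k1' \<and> length b = k2')"
   and b4: "\<forall>z. (\<forall>y\<in>set z. rx_ok n3' y) \<longrightarrow>
           (case d' z of (a, b) \<Rightarrow> length a = k1' \<and> length b = k2')"
    using assms(2) unfolding C' streaming_code_def by simp_all
  show ?thesis
    unfolding streaming_code_def comb_code_def C C' prod.case
  proof (intro conjI allI impI)
    fix ss :: "'a list list" assume h: "\<forall>s\<in>set ss. length s = k1 + k1'"
    show "length (f1 (map (take k1) ss) @ f1' (map (drop k1) ss)) = n1 + n1'"
    proof -
      have "length (f1 (map (take k1) ss)) = n1" by (rule a1[rule_format]) (use h in auto)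
      moreover have "length (f1' (map (drop k1) ss)) = n1'" by (rule b1[rule_format]) (use h in auto)
      ultimately show ?thesis by simp
    qed
  next
    fix ss :: "'a list list" assume h: "\<forall>s\<in>set ss. length s = k2 + k2'"
    show "length (f2 (map (take k2) ss) @ f2' (map (drop k2) ss)) = n2 + n2'"
    proof -
      have "length (f2 (map (take k2) ss)) = n2" by (rule a2[rule_format]) (use h in auto)
      moreover have "length (f2' (map (drop k2) ss)) = n2'" by (rule b2[rule_format]) (use h in auto)
      ultimately show ?thesis by simp
    qed
  next
    fix w1 w2 :: "'a list option list" and es :: "('a list \<times> 'a list) list"
    assume h: "(\<forall>y\<in>set w1. rx_ok (n1 + n1') y) \<and> (\<forall>y\<in>set w2. rx_ok (n2 + n2') y) \<and>
          (\<forall>(a, b)\<in>set es. length a = k1 + k1' \<and> length b = k2 + k2')"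
    let ?A = "g (map (map_option (take n1)) w1) (map (map_option (take n2)) w2) (map (\<lambda>(a,b). (take k1 a, take k2 b)) es)"
    let ?B = "g' (map (map_option (drop n1)) w1) (map (map_option (drop n2)) w2) (map (\<lambda>(a,b). (drop k1 a, drop k2 b)) es)"
    have A: "case ?A of (x, a, b) \<Rightarrow> length x = n3 \<and> length a = k1 \<and> length b = k2"
      apply (rule a3[rule_format])
      using h by (auto intro!: rx_take)
    have B: "case ?B of (x, a, b) \<Rightarrow> length x = n3' \<and> length a = k1' \<and> length b = k2'"
      apply (rule b3[rule_format])
      using h by (auto intro!: rx_drop)
    show "case comb_g n1 n2 k1 k2 g g' w1 w2 es of
       (x, a, b) \<Rightarrow> length x = n3 + n3' \<and> length a = k1 + k1' \<and> length b = k2 + k2'"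
      using A B unfolding comb_g_def comb3_def by (auto split: prod.splits)
  next
    fix z :: "'a list option list" assume h: "\<forall>y\<in>set z. rx_ok (n3 + n3') y"
    have A: "case d (map (map_option (take n3)) z) of (a, b) \<Rightarrow> length a = k1 \<and> length b = k2"
      apply (rule a4[rule_format])
      using h by (auto intro!: rx_take)
    have B: "case d' (map (map_option (drop n3)) z) of (a, b) \<Rightarrow> length a = k1' \<and> length b = k2'"
      apply (rule b4[rule_format])
      using h by (auto intro!: rx_drop)
    show "case case d (map (map_option (take n3)) z) of
            (a, b) \<Rightarrow> case d' (map (map_option (drop n3)) z) of (a', b') \<Rightarrow> (a @ a', b @ b') of
       (a, b) \<Rightarrow> length a = k1 + k1' \<and> length b = k2 + k2'"
      using A B by (auto split: prod.splits)
  qed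
qed

lemma comb_ach:
  assumes sc: "streaming_code n1 n2 n3 k1 k2 T C" and ac: "achievable N1 N2 N3 k1 k2 T C"
    and sc': "streaming_code n1' n2' n3' k1' k2' T C'" and ac': "achievable N1 N2 N3 k1' k2' T C'"
  shows "achievable N1 N2 N3 (k1+k1') (k2+k2') T (comb_code n1 n2 n3 k1 k2 C C')"
proof -
  obtain f1 f2 g d where C: "C = (f1,f2,g,d)" by (cases C) auto
  obtain f1' f2' g' d' where C': "C' = (f1',f2',g',d')" by (cases C') auto
  have a1: "\<forall>ss. (\<forall>s\<in>set ss. length s = k1) \<longrightarrow> length (f1 ss) = n1"
   and a2: "\<forall>ss. (\<forall>s\<in>set ss. length s = k2) \<longrightarrow> length (f2 ss) = n2"
   and a3: "\<forall>w1 w2 es. (\<forall>y\<in>set w1. rx_ok n1 y) \<and> (\<forall>y\<in>set w2. rx_ok n2 y) \<and>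
              (\<forall>(a, b)\<in>set es. length a = k1 \<and> length b = k2) \<longrightarrow>
           (case g w1 w2 es of (x, a, b) \<Rightarrow> length x = n3 \<and> length a = k1 \<and> length b = k2)"
    using sc unfolding C streaming_code_def by simp_all
  have b1: "\<forall>ss. (\<forall>s\<in>set ss. length s = k1') \<longrightarrow> length (f1' ss) = n1'"
   and b2: "\<forall>ss. (\<forall>s\<in>set ss. length s = k2') \<longrightarrow> length (f2' ss) = n2'"
   and b3: "\<forall>w1 w2 es. (\<forall>y\<in>set w1. rx_ok n1' y) \<and> (\<forall>y\<in>set w2. rx_ok n2' y) \<and>
              (\<forall>(a, b)\<in>set es. length a = k1' \<and> length b = k2') \<longrightarrow>
           (case g' w1 w2 es of (x, a, b) \<Rightarrow> length x = n3' \<and> length a = k1' \<and> length b = k2')"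
    using sc' unfolding C' streaming_code_def by simp_all
  show ?thesis unfolding achievable_def
  proof (intro allI impI)
    fix s1'' s2'' :: "nat \<Rightarrow> 'a list" and e1 e2 e3 :: "nat \<Rightarrow> bool" and t :: nat
    assume l1: "\<forall>t. length (s1'' t) = k1 + k1'" and l2: "\<forall>t. length (s2'' t) = k2 + k2'"
      and E1: "erasure_seq N1 e1" and E2: "erasure_seq N2 e2" and E3: "erasure_seq N3 e3"
    define s1 where "s1 = (\<lambda>t. take k1 (s1'' t))"
    define s1' where "s1' = (\<lambda>t. drop k1 (s1'' t))"
    define s2 where "s2 = (\<lambda>t. take k2 (s2'' t))"
    define s2' where "s2' = (\<lambda>t. drop k2 (s2'' t))"
    have ls1: "\<And>t. length (s1 t) = k1" and ls1': "\<And>t. length (s1' t) = k1'"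
     and ls2: "\<And>t. length (s2 t) = k2" and ls2': "\<And>t. length (s2' t) = k2'"
      using l1 l2 by (auto simp: s1_def s1'_def s2_def s2'_def)
    have D: "dest_estimate T C s1 s2 e1 e2 e3 t = (s1 t, s2 t)"
      using ac[unfolded achievable_def, rule_format, of s1 s2 e1 e2 e3 t] ls1 ls2 E1 E2 E3 by simp
    have D': "dest_estimate T C' s1' s2' e1 e2 e3 t = (s1' t, s2' t)"
      using ac'[unfolded achievable_def, rule_format, of s1' s2' e1 e2 e3 t] ls1' ls2' E1 E2 E3 by simp
    have p1: "\<And>t. length (src_packet f1 s1 t) = n1"
      unfolding src_packet_def by (rule a1[rule_format]) (auto simp: ls1)
    have p2: "\<And>t. length (src_packet f2 s2 t) = n2"
      unfolding src_packet_def by (rule a2[rule_format]) (auto simp: ls2)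
    have p1': "\<And>t. length (src_packet f1' s1' t) = n1'"
      unfolding src_packet_def by (rule b1[rule_format]) (auto simp: ls1')
    have p2': "\<And>t. length (src_packet f2' s2' t) = n2'"
      unfolding src_packet_def by (rule b2[rule_format]) (auto simp: ls2')
    define W1 where "W1 = window T (channel e1 (src_packet f1 s1))"
    define W2 where "W2 = window T (channel e2 (src_packet f2 s2))"
    define W1' where "W1' = window T (channel e1 (src_packet f1' s1'))"
    define W2' where "W2' = window T (channel e2 (src_packet f2' s2'))"
    define W1'' where "W1'' = window T (channel e1 (src_packet (\<lambda>ss. f1 (map (take k1) ss) @ f1' (map (drop k1) ss)) s1''))"
    define W2'' where "W2'' = window T (channel e2 (src_packet (\<lambda>ss. f2 (map (take k2) ss) @ f2' (map (drop k2) ss)) s2''))"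
    have sp1: "\<And>t. src_packet (\<lambda>ss. f1 (map (take k1) ss) @ f1' (map (drop k1) ss)) s1'' t
        = src_packet f1 s1 t @ src_packet f1' s1' t"
      by (simp add: src_packet_def s1_def s1'_def comp_def)
    have sp2: "\<And>t. src_packet (\<lambda>ss. f2 (map (take k2) ss) @ f2' (map (drop k2) ss)) s2'' t
        = src_packet f2 s2 t @ src_packet f2' s2' t"
      by (simp add: src_packet_def s2_def s2'_def comp_def)
    have w1: "(\<lambda>t. map (map_option (take n1)) (W1'' t)) = W1"
      by (rule ext) (simp add: W1''_def W1_def window_def channel_def sp1 p1)
    have w2: "(\<lambda>t. map (map_option (take n2)) (W2'' t)) = W2"
      by (rule ext) (simp add: W2''_def W2_def window_def channel_def sp2 p2)
    have w1': "(\<lambda>t. map (map_option (drop n1)) (W1'' t)) = W1'"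
      by (rule ext) (simp add: W1''_def W1'_def window_def channel_def sp1 p1)
    have w2': "(\<lambda>t. map (map_option (drop n2)) (W2'' t)) = W2'"
      by (rule ext) (simp add: W2''_def W2'_def window_def channel_def sp2 p2)
    have rx1: "\<And>t. \<forall>y\<in>set (W1 t). rx_ok n1 y"
      by (auto simp: W1_def window_def channel_def rx_ok_def p1)
    have rx2: "\<And>t. \<forall>y\<in>set (W2 t). rx_ok n2 y"
      by (auto simp: W2_def window_def channel_def rx_ok_def p2)
    have rx1': "\<And>t. \<forall>y\<in>set (W1' t). rx_ok n1' y"
      by (auto simp: W1'_def window_def channel_def rx_ok_def p1')
    have rx2': "\<And>t. \<forall>y\<in>set (W2' t). rx_ok n2' y"
      by (auto simp: W2'_def window_def channel_def rx_ok_def p2')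
    have wf: "\<And>t. \<forall>(x,a,b)\<in>set (relay_hist T g W1 W2 t). length x = n3 \<and> length a = k1 \<and> length b = k2"
      by (rule hist_wf[OF a3 rx1 rx2])
    have wf': "\<And>t. \<forall>(x,a,b)\<in>set (relay_hist T g' W1' W2' t). length x = n3' \<and> length a = k1' \<and> length b = k2'"
      by (rule hist_wf[OF b3 rx1' rx2'])
    have HC: "\<And>t. relay_hist T (comb_g n1 n2 k1 k2 g g') W1'' W2'' t =
       map (case_prod comb3) (zip (relay_hist T g W1 W2 t) (relay_hist T g' W1' W2' t))"
    proof -
      fix t
      show "relay_hist T (comb_g n1 n2 k1 k2 g g') W1'' W2'' t =
       map (case_prod comb3) (zip (relay_hist T g W1 W2 t) (relay_hist T g' W1' W2' t))"
        using hist_comb[of T g n1 W1'' n2 W2'' k1 k2 g' t] wf unfolding w1 w2 w1' w2'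
        by (fastforce simp: split_beta)
    qed
    define R where "R = relay_packet T C s1 s2 e1 e2"
    define R' where "R' = relay_packet T C' s1' s2' e1 e2"
    have RR: "\<And>t. relay_packet T (comb_code n1 n2 n3 k1 k2 C C') s1'' s2'' e1 e2 t = R t @ R' t"
    proof -
      fix t
      have "relay_hist T g W1 W2 (Suc t) ! t \<in> set (relay_hist T g W1 W2 (Suc t))"
        by (simp add: hist_len del: relay_hist.simps)
      show "relay_packet T (comb_code n1 n2 n3 k1 k2 C C') s1'' s2'' e1 e2 t = R t @ R' t"
        unfolding relay_packet_def R_def R'_def comb_code_def C C' prod.case
        apply (fold W1''_def W2''_def W1_def W2_def W1'_def W2'_def)
        by (simp add: HC hist_len comb3_def split_beta del: relay_hist.simps)
    qed
    have lR: "\<And>t. length (R t) = n3"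
    proof -
      fix t
      have "relay_hist T g W1 W2 (Suc t) ! t \<in> set (relay_hist T g W1 W2 (Suc t))"
        by (simp add: hist_len del: relay_hist.simps)
      then show "length (R t) = n3" using wf[of "Suc t"]
        unfolding R_def relay_packet_def C prod.case
        apply (fold W1_def W2_def) by (auto simp: split_beta)
    qed
    have z1: "map (map_option (take n3)) (map (channel e3 (\<lambda>t. R t @ R' t)) [0..<Suc (t + T)])
          = map (channel e3 R) [0..<Suc (t + T)]"
      by (simp add: channel_def lR)
    have z2: "map (map_option (drop n3)) (map (channel e3 (\<lambda>t. R t @ R' t)) [0..<Suc (t + T)])
          = map (channel e3 R') [0..<Suc (t + T)]"
      by (simp add: channel_def lR)
    have RR': "relay_packet T (comb_code n1 n2 n3 k1 k2 C C') s1'' s2'' e1 e2 = (\<lambda>t. R t @ R' t)"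
      by (rule ext) (rule RR)
    have Dd: "d (map (channel e3 R) [0..<Suc (t + T)]) = (s1 t, s2 t)"
      using D unfolding dest_estimate_def R_def C prod.case .
    have Dd': "d' (map (channel e3 R') [0..<Suc (t + T)]) = (s1' t, s2' t)"
      using D' unfolding dest_estimate_def R'_def C' prod.case .
    have "dest_estimate T (comb_code n1 n2 n3 k1 k2 C C') s1'' s2'' e1 e2 e3 t =
       (case d (map (map_option (take n3)) (map (channel e3 (\<lambda>t. R t @ R' t)) [0..<Suc (t + T)])) of (a,b) \<Rightarrow>
             case d' (map (map_option (drop n3)) (map (channel e3 (\<lambda>t. R t @ R' t)) [0..<Suc (t + T)])) of (a',b') \<Rightarrow> (a@a', b@b'))"
      unfolding dest_estimate_def RR' unfolding comb_code_def C C' prod.case ..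
    also have "\<dots> = (s1'' t, s2'' t)"
      unfolding z1 z2 Dd Dd' by (simp add: s1_def s1'_def s2_def s2'_def)
    finally show "dest_estimate T (comb_code n1 n2 n3 k1 k2 C C') s1'' s2'' e1 e2 e3 t = (s1'' t, s2'' t)" .
  qed
qed

lemma comb_ex:
  assumes "\<exists>C :: 'f scode. streaming_code n1 n2 n3 k1 k2 T C \<and> achievable N1 N2 N3 k1 k2 T C"
    and "\<exists>C' :: 'f scode. streaming_code n1' n2' n3' k1' k2' T C' \<and> achievable N1 N2 N3 k1' k2' T C'"
  shows "\<exists>C'' :: 'f scode. streaming_code (n1+n1') (n2+n2') (n3+n3') (k1+k1') (k2+k2') T C''
            \<and> achievable N1 N2 N3 (k1+k1') (k2+k2') T C''"
proof -
  obtain C :: "'f scode" where C: "streaming_code n1 n2 n3 k1 k2 T C" "achievable N1 N2 N3 k1 k2 T C" using assms(1) by blast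
  obtain C' :: "'f scode" where C': "streaming_code n1' n2' n3' k1' k2' T C'" "achievable N1 N2 N3 k1' k2' T C'" using assms(2) by blast
  show ?thesis
    using comb_sc[OF C(1) C'(1)] comb_ach[OF C(1) C(2) C'(1) C'(2)] by blast
qed

lemma zero_ex:
  "\<exists>C :: 'f scode. streaming_code 0 0 0 0 0 T C \<and> achievable N1 N2 N3 0 0 T C"
proof
  let ?C = "((\<lambda>_. []), (\<lambda>_. []), (\<lambda>_ _ _. ([], [], [])), (\<lambda>_. ([], []))) :: 'f scode"
  show "streaming_code 0 0 0 0 0 T ?C \<and> achievable N1 N2 N3 0 0 T ?C"
    by (simp add: streaming_code_def achievable_def dest_estimate_def)
qed

lemma mult_ex:
  assumes "\<exists>C :: 'f scode. streaming_code n1 n2 n3 k1 k2 T C \<and> achievable N1 N2 N3 k1 k2 T C"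
  shows "\<exists>C :: 'f scode. streaming_code (A*n1) (A*n2) (A*n3) (A*k1) (A*k2) T C \<and> achievable N1 N2 N3 (A*k1) (A*k2) T C"
proof (induction A)
  case 0
  then show ?case using zero_ex by simp
next
  case (Suc A)
  then show ?case using comb_ex[OF assms Suc] by simp
qed

theorem lemma6:
  fixes C :: "'f::{field,finite} scode" and C' :: "'f scode"
    and n1 n2 n3 k1 k2 n1' n2' n3' k1' k2' T N1 N2 N3 A B :: nat
  assumes "streaming_code n1 n2 n3 k1 k2 T C" "achievable N1 N2 N3 k1 k2 T C"
    and "streaming_code n1' n2' n3' k1' k2' T C'" "achievable N1 N2 N3 k1' k2' T C'"
  shows "\<exists>C'' :: 'f scode.
           streaming_code (A*n1 + B*n1') (A*n2 + B*n2') (A*n3 + B*n3') (A*k1 + B*k1') (A*k2 + B*k2') T C''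
         \<and> achievable N1 N2 N3 (A*k1 + B*k1') (A*k2 + B*k2') T C''"
proof -
  have "\<exists>C :: 'f scode. streaming_code n1 n2 n3 k1 k2 T C \<and> achievable N1 N2 N3 k1 k2 T C"
    using assms by blast
  note h1 = mult_ex[OF this, of A]
  have "\<exists>C :: 'f scode. streaming_code n1' n2' n3' k1' k2' T C \<and> achievable N1 N2 N3 k1' k2' T C"
    using assms by blast
  note h2 = mult_ex[OF this, of B]
  show ?thesis using comb_ex[OF h1 h2] .
qed

end
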